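(* Let $x\in\mathbb{D}$ and $r\in\mathbb{N}$. (i) If $\#\mathbb{A}^+_1(x)\le1$ then $\mathcal{R}_{trim}$ is jointly $J_1$-continuous at $x$; consequently, if $\#\mathbb{A}^+_1(\mathcal{R}^{(j)}_{trim}(x))\le1$ for all $j=0,\dots,r-1$, then $\mathcal{R}^{(r)}_{trim}$ is jointly $J_1$-continuous at $x$. (ii) If $\mathcal{R}_{trim}$ is $J_1$-continuous at $x$ then $\#\mathbb{A}^+_1(x)\le1$. The same statements (i) and (ii) hold with $\mathcal{R}_{trim},\mathcal{R}^{(j)}_{trim}$ replaced by $\widetilde{\mathcal{R}}_{trim},\widetilde{\mathcal{R}}^{(j)}_{trim}$ and $\#\mathbb{A}^+_1(\cdot)$ replaced by $\#\widetilde{\mathbb{A}}_1(\cdot)$.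
   Context: $\mathbb{D}=\mathbb{D}([0,1],\mathbb{R})$ is the space of càdlàg functions on $[0,1]$ with the Skorokhod $J_1$-topology, $\|x\|=\sup_{0\le\tau\le1}|x(\tau)|$. $\Lambda$ is the set of continuous strictly increasing $\lambda:[0,1]\to[0,1]$ with $\lambda(0)=0,\lambda(1)=1$; $I$ the identity. $x_n\to x$ in $J_1$ means there are $\lambda_n\in\Lambda$ with $\|\lambda_n-I\|\vee\|x_n\circ\lambda_n-x\|\to0$. $\Psi:\mathbb{D}\to\mathbb{D}$ is $J_1$-continuous at $x$ if $x_n\to x$ in $J_1$ implies $\Psi(x_n)\to\Psi(x)$ in $J_1$; it is jointly $J_1$-continuous at $x$ if for every $x_n\to x$ in $J_1$ there exist $\lambda_n\in\Lambda$ with simultaneously $\|\lambda_n-I\|\to0$, $\|x_n\circ\lambda_n-x\|\to0$, $\|\Psi(x_n)\circ\lambda_n-\Psi(x)\|\to0$. For $x\in\mathbb{D}$: $\Delta x(\tau)=x(\tau)-x(\tau-)$ ($\tau>0$), $\Delta x(0)=0$; $\mathcal{S}_{+\Delta}(x)(\tau)=\sup_{0\le s\le\tau}\Delta x(s)$, $\widetilde{\mathcal{S}}_\Delta(x)(\tau)=\sup_{0\le s\le\tau}|\Delta x(s)|$. $\mathbb{A}^+_\tau(x)=\{0<s\le\tau:\Delta x(s)=\mathcal{S}_{+\Delta}(x)(\tau)\}$ and $\widetilde{\mathbb{A}}_\tau(x)=\{0<s\le\tau:|\Delta x(s)|=\widetilde{\mathcal{S}}_\Delta(x)(\tau)\}$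 (empty by convention when $x$ is continuous on $[0,\tau]$). First record times: $R_1(x)=\inf\{s\in[0,1]:\Delta x(s)=\mathcal{S}_{+\Delta}(x)(1)\}$, $\widetilde R_1(x)=\inf\{s\in[0,1]:|\Delta x(s)|=\widetilde{\mathcal{S}}_\Delta(x)(1)\}$. Record time trimmers: $\mathcal{R}_{trim}(x)=x-\Delta x(R_1(x))\mathbf{1}_{[R_1(x),1]}$, $\widetilde{\mathcal{R}}_{trim}(x)=x-\Delta x(\widetilde R_1(x))\mathbf{1}_{[\widetilde R_1(x),1]}$; $\mathcal{R}^{(0)}_{trim}(x)=x$, $\mathcal{R}^{(r)}_{trim}(x)=\mathcal{R}_{trim}(\mathcal{R}^{(r-1)}_{trim}(x))$, and likewise $\widetilde{\mathcal{R}}^{(0)}_{trim}(x)=x$, $\widetilde{\mathcal{R}}^{(r)}_{trim}(x)=\widetilde{\mathcal{R}}_{trim}(\widetilde{\mathcal{R}}^{(r-1)}_{trim}(x))$. *)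

theory Defs
  imports "HOL-Analysis.Analysis"
begin

text \<open>Elements of D([0,1],R) are represented as functions real => real; only the
values on [0,1] are relevant.\<close>

definition cadlag :: "(real \<Rightarrow> real) \<Rightarrow> bool" where
  "cadlag x \<longleftrightarrow>
     (\<forall>t\<in>{0..<1}. (x \<longlongrightarrow> x t) (at_right t)) \<and>
     (\<forall>t\<in>{0<..1}. \<exists>l. (x \<longlongrightarrow> l) (at_left t))"

definition Lambda :: "(real \<Rightarrow> real) set" where
  "Lambda = {lam. continuous_on {0..1} lam \<and> strict_mono_on {0..1} lam
                  \<and> lam 0 = 0 \<and> lam 1 = 1}"

definition unif_to_zero :: "(nat \<Rightarrow> real \<Rightarrow> real) \<Rightarrow> bool" where
  "unif_to_zero f \<longleftrightarrow>
     (\<forall>e>0. eventually (\<lambda>n. \<forall>\<tau>\<in>{0..1}. \<bar>f n \<tau>\<bar> < e) sequentially)"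

definition J1_conv :: "(nat \<Rightarrow> real \<Rightarrow> real) \<Rightarrow> (real \<Rightarrow> real) \<Rightarrow> bool" where
  "J1_conv xs x \<longleftrightarrow>
     (\<exists>lam. (\<forall>n. lam n \<in> Lambda) \<and> unif_to_zero (\<lambda>n \<tau>. lam n \<tau> - \<tau>)
           \<and> unif_to_zero (\<lambda>n \<tau>. xs n (lam n \<tau>) - x \<tau>))"

definition J1_continuous_at ::
    "((real \<Rightarrow> real) \<Rightarrow> (real \<Rightarrow> real)) \<Rightarrow> (real \<Rightarrow> real) \<Rightarrow> bool" where
  "J1_continuous_at Psi x \<longleftrightarrow>
     (\<forall>xs. (\<forall>n. cadlag (xs n)) \<longrightarrow> J1_conv xs x \<longrightarrow>
        J1_conv (\<lambda>n. Psi (xs n)) (Psi x))"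

definition J1_jointly_continuous_at ::
    "((real \<Rightarrow> real) \<Rightarrow> (real \<Rightarrow> real)) \<Rightarrow> (real \<Rightarrow> real) \<Rightarrow> bool" where
  "J1_jointly_continuous_at Psi x \<longleftrightarrow>
     (\<forall>xs. (\<forall>n. cadlag (xs n)) \<longrightarrow> J1_conv xs x \<longrightarrow>
        (\<exists>lam. (\<forall>n. lam n \<in> Lambda) \<and> unif_to_zero (\<lambda>n \<tau>. lam n \<tau> - \<tau>)
           \<and> unif_to_zero (\<lambda>n \<tau>. xs n (lam n \<tau>) - x \<tau>)
           \<and> unif_to_zero (\<lambda>n \<tau>. Psi (xs n) (lam n \<tau>) - Psi x \<tau>)))"

definition jump :: "(real \<Rightarrow> real) \<Rightarrow> real \<Rightarrow> real" where
  "jump x \<tau> = (if \<tau> \<le> 0 then 0 else x \<tau> - Lim (at_left \<tau>) x)"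

definition S_plus :: "(real \<Rightarrow> real) \<Rightarrow> real \<Rightarrow> real" where
  "S_plus x \<tau> = (SUP s\<in>{0..\<tau>}. jump x s)"

definition S_abs :: "(real \<Rightarrow> real) \<Rightarrow> real \<Rightarrow> real" where
  "S_abs x \<tau> = (SUP s\<in>{0..\<tau>}. \<bar>jump x s\<bar>)"

definition A_plus :: "real \<Rightarrow> (real \<Rightarrow> real) \<Rightarrow> real set" where
  "A_plus \<tau> x = {s. 0 < s \<and> s \<le> \<tau> \<and> S_plus x \<tau> > 0 \<and> jump x s = S_plus x \<tau>}"

definition A_abs :: "real \<Rightarrow> (real \<Rightarrow> real) \<Rightarrow> real set" where
  "A_abs \<tau> x = {s. 0 < s \<and> s \<le> \<tau> \<and> S_abs x \<tau> > 0 \<and> \<bar>jump x s\<bar> = S_abs x \<tau>}"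

definition R1 :: "(real \<Rightarrow> real) \<Rightarrow> real" where
  "R1 x = Inf {s\<in>{0..1}. jump x s = S_plus x 1}"

definition R1_abs :: "(real \<Rightarrow> real) \<Rightarrow> real" where
  "R1_abs x = Inf {s\<in>{0..1}. \<bar>jump x s\<bar> = S_abs x 1}"

definition R_trim :: "(real \<Rightarrow> real) \<Rightarrow> (real \<Rightarrow> real)" where
  "R_trim x = (\<lambda>t. x t - jump x (R1 x) * indicator {R1 x..1} t)"

definition R_trim_abs :: "(real \<Rightarrow> real) \<Rightarrow> (real \<Rightarrow> real)" where
  "R_trim_abs x = (\<lambda>t. x t - jump x (R1_abs x) * indicator {R1_abs x..1} t)"

definition at_most_one :: "'a set \<Rightarrow> bool" where
  "at_most_one A \<longleftrightarrow> finite A \<and> card A \<le> 1"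

end

theory Submission
  imports Defs
begin



lemma left_lim:
  assumes "cadlag x" "0 < t" "t \<le> 1"
  shows "(x \<longlongrightarrow> Lim (at_left t) x) (at_left t)"
proof -
  have "\<forall>t\<in>{0<..1}. \<exists>l. (x \<longlongrightarrow> l) (at_left t)" using assms(1) by (simp add: cadlag_def)
  then obtain l where "(x \<longlongrightarrow> l) (at_left t)" using assms(2,3) by force
  then show ?thesis by (metis tendsto_Lim trivial_limit_at_left_real)
qed

lemma jump_eq:
  assumes "0 < t" "(x \<longlongrightarrow> L) (at_left t)"
  shows "jump x t = x t - L"
proof -
  have "Lim (at_left t) x = L" using assms(2) by (metis tendsto_Lim trivial_limit_at_left_real)
  then show ?thesis using assms by (simp add: jump_def)
qed

lemma jump_0[simp]: "jump x 0 = 0" by (simp add: jump_def)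

lemma tri4: "\<bar>a - c\<bar> \<le> e/4 \<Longrightarrow> \<bar>b - c\<bar> < e/4 \<Longrightarrow> \<bar>b - a\<bar> \<le> (e::real)/2"
  by linarith

lemma jump_right_small:
  assumes "cadlag x" "0 \<le> t" "t < 1" "e > 0"
  shows "\<exists>d>0. \<forall>s. t < s \<and> s < t + d \<and> s \<le> 1 \<longrightarrow> \<bar>jump x s\<bar> \<le> e/2"
proof -
  have "(x \<longlongrightarrow> x t) (at_right t)" using assms unfolding cadlag_def by auto
  then have "eventually (\<lambda>s. dist (x s) (x t) < e/4) (at_right t)"
    by (rule tendstoD) (use assms(4) in simp)
  then obtain b where b: "b > t" "\<And>y. y > t \<Longrightarrow> y < b \<Longrightarrow> \<bar>x y - x t\<bar> < e/4"
    by (auto simp: eventually_at_right_field dist_real_def)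
  show ?thesis
  proof (intro exI[of _ "b - t"] conjI allI impI)
    show "b - t > 0" using b by simp
    fix s assume s: "t < s \<and> s < t + (b - t) \<and> s \<le> 1"
    have L: "(x \<longlongrightarrow> Lim (at_left s) x) (at_left s)" using left_lim[OF assms(1)] s assms by auto
    have "eventually (\<lambda>y. y \<in> {t<..<s}) (at_left s)" using s by (intro eventually_at_left_real) auto
    then have "eventually (\<lambda>y. \<bar>x y - x t\<bar> \<le> e/4) (at_left s)"
      by eventually_elim (use b s in \<open>force intro: less_imp_le\<close>)
    then have "\<bar>Lim (at_left s) x - x t\<bar> \<le> e/4"
      by (intro tendsto_upperbound[OF tendsto_rabs[OF tendsto_diff[OF L tendsto_const]]]) auto
    moreover have "\<bar>x s - x t\<bar> < e/4" using b s by auto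
    ultimately have "\<bar>x s - Lim (at_left s) x\<bar> \<le> e/2" by (rule tri4)
    then show "\<bar>jump x s\<bar> \<le> e/2" using s assms by (simp add: jump_def)
  qed
qed

lemma jump_left_small:
  assumes "cadlag x" "0 < t" "t \<le> 1" "e > 0"
  shows "\<exists>d>0. \<forall>s. t - d < s \<and> s < t \<longrightarrow> \<bar>jump x s\<bar> \<le> e/2"
proof -
  have Lt: "(x \<longlongrightarrow> Lim (at_left t) x) (at_left t)" using left_lim assms by auto
  define L where "L = Lim (at_left t) x"
  have "eventually (\<lambda>s. dist (x s) L < e/4) (at_left t)"
    using Lt unfolding L_def by (rule tendstoD) (use assms(4) in simp)
  then obtain b where b: "b < t" "\<And>y. y > b \<Longrightarrow> y < t \<Longrightarrow> \<bar>x y - L\<bar> < e/4"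
    by (auto simp: eventually_at_left_field dist_real_def)
  show ?thesis
  proof (intro exI[of _ "t - b"] conjI allI impI)
    show "t - b > 0" using b by simp
    fix s assume s: "t - (t - b) < s \<and> s < t"
    show "\<bar>jump x s\<bar> \<le> e/2"
    proof (cases "s > 0")
      case False then show ?thesis using assms by (simp add: jump_def)
    next
      case True
      have L: "(x \<longlongrightarrow> Lim (at_left s) x) (at_left s)" using left_lim[OF assms(1)] s assms True by auto
      have "eventually (\<lambda>y. y \<in> {b<..<s}) (at_left s)" using s by (intro eventually_at_left_real) auto
      then have "eventually (\<lambda>y. \<bar>x y - L\<bar> \<le> e/4) (at_left s)"
        by eventually_elim (use b s in \<open>force intro: less_imp_le\<close>)
      then have "\<bar>Lim (at_left s) x - L\<bar> \<le> e/4"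
        by (intro tendsto_upperbound[OF tendsto_rabs[OF tendsto_diff[OF L tendsto_const]]]) auto
      moreover have "\<bar>x s - L\<bar> < e/4" using b s by auto
      ultimately have "\<bar>x s - Lim (at_left s) x\<bar> \<le> e/2" by (rule tri4)
      then show "\<bar>jump x s\<bar> \<le> e/2" using True by (simp add: jump_def)
    qed
  qed
qed

lemma jump_local_small:
  assumes "cadlag x" "0 \<le> t" "t \<le> 1" "e > 0"
  shows "\<exists>d>0. \<forall>s\<in>{0..1}. s \<noteq> t \<and> \<bar>s - t\<bar> < d \<longrightarrow> \<bar>jump x s\<bar> < e"
proof -
  have "\<exists>d1. d1 > 0 \<and> (t < 1 \<longrightarrow> (\<forall>s. t < s \<and> s < t + d1 \<and> s \<le> 1 \<longrightarrow> \<bar>jump x s\<bar> \<le> e/2))"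
  proof (cases "t < 1")
    case True then show ?thesis using jump_right_small[OF assms(1,2) _ assms(4)] by blast
  next
    case False then show ?thesis by (intro exI[of _ 1]) auto
  qed
  then obtain d1 where d1: "d1 > 0" "t < 1 \<Longrightarrow> \<forall>s. t < s \<and> s < t + d1 \<and> s \<le> 1 \<longrightarrow> \<bar>jump x s\<bar> \<le> e/2"
    by blast
  have "\<exists>d2. d2 > 0 \<and> (0 < t \<longrightarrow> (\<forall>s. t - d2 < s \<and> s < t \<longrightarrow> \<bar>jump x s\<bar> \<le> e/2))"
  proof (cases "0 < t")
    case True then show ?thesis using jump_left_small[OF assms(1) _ assms(3,4)] by blast
  next
    case False then show ?thesis by (intro exI[of _ 1]) auto
  qed
  then obtain d2 where d2: "d2 > 0" "0 < t \<Longrightarrow> \<forall>s. t - d2 < s \<and> s < t \<longrightarrow> \<bar>jump x s\<bar> \<le> e/2"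
    by blast
  show ?thesis
  proof (intro exI[of _ "min d1 d2"] conjI ballI impI)
    show "min d1 d2 > 0" using d1 d2 by simp
    fix s assume s: "s \<in> {0..1}" "s \<noteq> t \<and> \<bar>s - t\<bar> < min d1 d2"
    show "\<bar>jump x s\<bar> < e"
    proof (cases "s > t")
      case True
      then have "\<bar>jump x s\<bar> \<le> e/2" using d1(2)[of] s by auto
      then show ?thesis using assms by simp
    next
      case False
      then have "s < t" using s by auto
      then have "\<bar>jump x s\<bar> \<le> e/2" using d2(2) s by auto
      then show ?thesis using assms by simp
    qed
  qed
qed

lemma finite_bigjumps:
  assumes "cadlag x" "e > 0"
  shows "finite {t\<in>{0..1}. \<bar>jump x t\<bar> \<ge> e}"
proof -
  have "\<forall>t\<in>{0..1::real}. \<exists>d>0. \<forall>s\<in>{0..1}. s \<noteq> t \<and> \<bar>s - t\<bar> < d \<longrightarrow> \<bar>jump x s\<bar> < e"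
    using jump_local_small[OF assms(1) _ _ assms(2)] by auto
  then obtain d where d: "\<And>t. t \<in> {0..1} \<Longrightarrow> d t > 0"
     "\<And>t s. t \<in> {0..1} \<Longrightarrow> s \<in> {0..1} \<Longrightarrow> s \<noteq> t \<Longrightarrow> \<bar>s - t\<bar> < d t \<Longrightarrow> \<bar>jump x s\<bar> < e"
    by metis
  have cov: "{0..1::real} \<subseteq> (\<Union>c\<in>{0..1}. ball c (d c))"
    using d(1) by force
  obtain C where C: "C \<subseteq> {0..1}" "finite C" "{0..1::real} \<subseteq> (\<Union>c\<in>C. ball c (d c))"
    by (rule compactE_image[OF compact_Icc _ cov]) auto
  have "{t\<in>{0..1}. \<bar>jump x t\<bar> \<ge> e} \<subseteq> C"
  proof
    fix s assume s: "s \<in> {t\<in>{0..1}. \<bar>jump x t\<bar> \<ge> e}"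
    then obtain c where c: "c \<in> C" "s \<in> ball c (d c)" using C(3) by auto
    have "\<bar>s - c\<bar> < d c" using c by (auto simp: dist_real_def)
    then have "s = c" using d(2)[of c s] C(1) c s by force
    then show "s \<in> C" using c by simp
  qed
  then show ?thesis using C(2) finite_subset by blast
qed




definition goodg :: "(real \<Rightarrow> real) \<Rightarrow> bool" where
  "goodg g \<longleftrightarrow> g 0 = 0 \<and> (\<forall>u v. \<bar>g u - g v\<bar> \<le> \<bar>u - v\<bar>) \<and> (\<forall>u. 0 \<le> g u \<longrightarrow> \<bar>u\<bar> = g u)
      \<and> (\<forall>c u. 0 \<le> c \<longrightarrow> g (c * u) = c * g u)"

definition Sg :: "(real \<Rightarrow> real) \<Rightarrow> (real \<Rightarrow> real) \<Rightarrow> real" where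
  "Sg g z = (SUP s\<in>{0..1}. g (jump z s))"
definition Ag :: "(real \<Rightarrow> real) \<Rightarrow> (real \<Rightarrow> real) \<Rightarrow> real set" where
  "Ag g z = {s. 0 < s \<and> s \<le> 1 \<and> Sg g z > 0 \<and> g (jump z s) = Sg g z}"
definition R1g :: "(real \<Rightarrow> real) \<Rightarrow> (real \<Rightarrow> real) \<Rightarrow> real" where
  "R1g g z = Inf {s\<in>{0..1}. g (jump z s) = Sg g z}"
definition trim :: "(real \<Rightarrow> real) \<Rightarrow> (real \<Rightarrow> real) \<Rightarrow> (real \<Rightarrow> real)" where
  "trim g z = (\<lambda>t. z t - jump z (R1g g z) * indicator {R1g g z..1} t)"

lemma goodg_id: "goodg (\<lambda>u. u)" by (simp add: goodg_def)
lemma goodg_abs: "goodg abs" by (auto simp: goodg_def abs_mult)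

lemma R_trim_eq: "R_trim = trim (\<lambda>u. u)"
  by (rule ext) (simp add: R_trim_def trim_def R1_def R1g_def S_plus_def Sg_def)
lemma R_trim_abs_eq: "R_trim_abs = trim abs"
  by (rule ext) (simp add: R_trim_abs_def trim_def R1_abs_def R1g_def S_abs_def Sg_def)
lemma A_plus_eq: "A_plus 1 = Ag (\<lambda>u. u)"
  by (rule ext) (simp add: A_plus_def Ag_def S_plus_def Sg_def)
lemma A_abs_eq: "A_abs 1 = Ag abs"
  by (rule ext) (simp add: A_abs_def Ag_def S_abs_def Sg_def)

lemma goodg_le: "goodg g \<Longrightarrow> g u \<le> \<bar>u\<bar>"
  unfolding goodg_def by (metis abs_le_D1 diff_zero)
lemma goodg_lip: "goodg g \<Longrightarrow> \<bar>g u - g v\<bar> \<le> \<bar>u - v\<bar>"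
  unfolding goodg_def by blast
lemma goodg_0[simp]: "goodg g \<Longrightarrow> g 0 = 0"
  unfolding goodg_def by blast
lemma goodg_nonneg: "goodg g \<Longrightarrow> 0 \<le> g u \<Longrightarrow> \<bar>u\<bar> = g u"
  unfolding goodg_def by blast
lemma goodg_scale: "goodg g \<Longrightarrow> 0 \<le> c \<Longrightarrow> g (c * u) = c * g u"
  unfolding goodg_def by blast

lemma jumps_bounded:
  assumes "cadlag z"
  shows "\<exists>M. \<forall>s\<in>{0..1}. \<bar>jump z s\<bar> \<le> M"
proof -
  define F where "F = {t\<in>{0..1}. \<bar>jump z t\<bar> \<ge> 1}"
  have fin: "finite F" unfolding F_def using finite_bigjumps[OF assms, of 1] by simp
  show ?thesis
  proof (intro exI[of _ "1 + (\<Sum>t\<in>F. \<bar>jump z t\<bar>)"] ballI)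
    fix s :: real assume s: "s \<in> {0..1}"
    have nn: "0 \<le> (\<Sum>t\<in>F. \<bar>jump z t\<bar>)" by (simp add: sum_nonneg)
    show "\<bar>jump z s\<bar> \<le> 1 + (\<Sum>t\<in>F. \<bar>jump z t\<bar>)"
    proof (cases "s \<in> F")
      case True
      then have "\<bar>jump z s\<bar> \<le> (\<Sum>t\<in>F. \<bar>jump z t\<bar>)"
        using fin by (intro member_le_sum) auto
      then show ?thesis by simp
    next
      case False then have "\<bar>jump z s\<bar> < 1" using s unfolding F_def by auto
      then show ?thesis using nn by linarith
    qed
  qed
qed

lemma Sg_bdd:
  assumes "goodg g" "cadlag z"
  shows "bdd_above ((\<lambda>s. g (jump z s)) ` {0..1})"
proof -
  obtain M where "\<forall>s\<in>{0..1}. \<bar>jump z s\<bar> \<le> M" using jumps_bounded[OF assms(2)] by blast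
  then show ?thesis using goodg_le[OF assms(1)]
    by (intro bdd_aboveI2[of _ _ M]) (meson order_trans)
qed

lemma Sg_upper:
  assumes "goodg g" "cadlag z" "s \<in> {0..1}"
  shows "g (jump z s) \<le> Sg g z"
  unfolding Sg_def by (rule cSUP_upper[OF assms(3) Sg_bdd[OF assms(1,2)]])

lemma Sg_nonneg:
  assumes "goodg g" "cadlag z"
  shows "0 \<le> Sg g z"
  using Sg_upper[OF assms, of 0] assms(1) by simp

lemma Sg_least:
  assumes "\<And>s. s \<in> {0..1} \<Longrightarrow> g (jump z s) \<le> M"
  shows "Sg g z \<le> M"
  unfolding Sg_def by (rule cSUP_least) (use assms in auto)

lemma gap:
  assumes "goodg g" "cadlag z" "Sg g z > 0"
  shows "finite (Ag g z)" "Ag g z \<noteq> {}"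
    "\<exists>\<eta>>0. \<forall>t\<in>{0..1}. t \<notin> Ag g z \<longrightarrow> g (jump z t) \<le> Sg g z - \<eta>"
proof -
  define S where "S = Sg g z"
  define F where "F = {t\<in>{0..1}. \<bar>jump z t\<bar> \<ge> S/2}"
  have finF: "finite F" unfolding F_def using finite_bigjumps[OF assms(2), of "S/2"] assms(3) S_def by simp
  have AF: "Ag g z \<subseteq> F"
  proof
    fix s assume "s \<in> Ag g z"
    then have s: "0 < s" "s \<le> 1" "g (jump z s) = S" using assms(3) unfolding Ag_def S_def by auto
    then have "\<bar>jump z s\<bar> = S" using goodg_nonneg[OF assms(1)] assms(3) S_def by force
    then show "s \<in> F" using s assms(3) S_def unfolding F_def by auto
  qed
  show "finite (Ag g z)" using AF finF finite_subset by blast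
  define V where "V = (\<lambda>t. g (jump z t)) ` (F - Ag g z)"
  define m where "m = (if V = {} then 0 else Max V)"
  have finV: "finite V" using finF V_def by simp
  have Vlt: "\<forall>v\<in>V. v < S"
  proof
    fix v assume "v \<in> V"
    then obtain t where t: "t \<in> F" "t \<notin> Ag g z" "v = g (jump z t)" unfolding V_def by auto
    have t01: "t \<in> {0..1}" using t unfolding F_def by auto
    have le: "v \<le> S" using Sg_upper[OF assms(1,2) t01] t S_def by simp
    show "v < S"
    proof (cases "t = 0")
      case True then show ?thesis using t assms S_def by simp
    next
      case False
      then have "v \<noteq> S" using t t01 assms(3) S_def unfolding Ag_def by auto
      then show ?thesis using le by simp
    qed
  qed
  have mlt: "m < S"
  proof (cases "V = {}")
    case True then show ?thesis using m_def assms(3) S_def by simp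
  next
    case False
    then have "Max V \<in> V" using finV by simp
    then show ?thesis using Vlt m_def False by auto
  qed
  have Vle: "\<forall>v\<in>V. v \<le> m" using finV m_def by auto
  define \<eta> where "\<eta> = min (S/2) (S - m)"
  have eta: "\<eta> > 0" using mlt assms(3) S_def \<eta>_def by simp
  have main: "\<forall>t\<in>{0..1}. t \<notin> Ag g z \<longrightarrow> g (jump z t) \<le> S - \<eta>"
  proof (intro ballI impI)
    fix t :: real assume t: "t \<in> {0..1}" "t \<notin> Ag g z"
    show "g (jump z t) \<le> S - \<eta>"
    proof (cases "t \<in> F")
      case True
      then have "g (jump z t) \<in> V" using t V_def by auto
      then have "g (jump z t) \<le> m" using Vle by auto
      then show ?thesis using \<eta>_def by simp
    next
      case False
      then have "\<bar>jump z t\<bar> < S/2" using t unfolding F_def by auto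
      then have "g (jump z t) < S/2" using goodg_le[OF assms(1), of "jump z t"] by simp
      then show ?thesis using \<eta>_def by simp
    qed
  qed
  then show "\<exists>\<eta>>0. \<forall>t\<in>{0..1}. t \<notin> Ag g z \<longrightarrow> g (jump z t) \<le> Sg g z - \<eta>"
    using eta S_def by blast
  show "Ag g z \<noteq> {}"
  proof
    assume "Ag g z = {}"
    then have "Sg g z \<le> S - \<eta>" using main by (intro Sg_least) auto
    then show False using eta S_def by simp
  qed
qed

lemma R1g_props:
  assumes "goodg g" "cadlag z"
  shows "g (jump z (R1g g z)) = Sg g z" "R1g g z \<in> {0..1}"
    "Sg g z > 0 \<Longrightarrow> R1g g z = Min (Ag g z)"
proof -
  define P where "P = {s\<in>{0..1}. g (jump z s) = Sg g z}"
  have "g (jump z (R1g g z)) = Sg g z \<and> R1g g z \<in> {0..1} \<and> (Sg g z > 0 \<longrightarrow> R1g g z = Min (Ag g z))"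
  proof (cases "Sg g z > 0")
    case True
    have PA: "P = Ag g z"
      unfolding P_def Ag_def using True assms(1) by (auto simp: less_eq_real_def)
    have R: "R1g g z = Min (Ag g z)"
      unfolding R1g_def P_def[symmetric] PA using gap(1,2)[OF assms True] by (simp add: cInf_eq_Min)
    have "Min (Ag g z) \<in> Ag g z" using gap(1,2)[OF assms True] by simp
    then show ?thesis using R unfolding Ag_def by auto
  next
    case False
    then have S0: "Sg g z = 0" using Sg_nonneg[OF assms] by simp
    have "0 \<in> P" unfolding P_def using S0 assms(1) by simp
    moreover have "\<forall>p\<in>P. 0 \<le> p" unfolding P_def by auto
    ultimately have "Inf P = 0" by (meson cInf_eq_minimum)
    then have "R1g g z = 0" unfolding R1g_def P_def by simp
    then show ?thesis using S0 False assms(1) by simp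
  qed
  then show "g (jump z (R1g g z)) = Sg g z" "R1g g z \<in> {0..1}"
    "Sg g z > 0 \<Longrightarrow> R1g g z = Min (Ag g z)" by auto
qed




lemma lam_props:
  assumes "lam \<in> Lambda"
  shows "continuous_on {0..1} lam" "strict_mono_on {0..1} lam" "lam 0 = 0" "lam 1 = 1"
  using assms by (auto simp: Lambda_def)

lemma lam_01:
  assumes "lam \<in> Lambda" "\<tau> \<in> {0..1}"
  shows "lam \<tau> \<in> {0..1}"
proof -
  have "lam 0 \<le> lam \<tau>" "lam \<tau> \<le> lam 1"
    using strict_mono_on_leD[OF lam_props(2)[OF assms(1)]] assms(2) by auto
  then show ?thesis using lam_props[OF assms(1)] by simp
qed

lemma lam_le_iff:
  assumes "lam \<in> Lambda" "a \<in> {0..1}" "b \<in> {0..1}"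
  shows "lam a \<le> lam b \<longleftrightarrow> a \<le> b"
  using strict_mono_on_less_eq[OF lam_props(2)[OF assms(1)] assms(2,3)] .

lemma lam_eq_iff:
  assumes "lam \<in> Lambda" "a \<in> {0..1}" "b \<in> {0..1}"
  shows "lam a = lam b \<longleftrightarrow> a = b"
  using lam_le_iff[OF assms(1,2,3)] lam_le_iff[OF assms(1,3,2)] by auto

lemma lam_surj:
  assumes "lam \<in> Lambda" "s \<in> {0..1}"
  shows "\<exists>t\<in>{0..1}. lam t = s"
  using IVT'[of lam 0 s 1] lam_props[OF assms(1)] assms(2) by auto

lemma id_Lambda: "(\<lambda>t. t) \<in> Lambda"
  by (auto simp: Lambda_def strict_mono_on_def)

lemma lam_filterlim:
  assumes "lam \<in> Lambda" "0 < t" "t \<le> 1"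
  shows "filterlim lam (at_left (lam t)) (at_left t)"
proof -
  have "continuous_on {0..t} lam"
    by (rule continuous_on_subset[OF lam_props(1)[OF assms(1)]]) (use assms in auto)
  then have "(lam \<longlongrightarrow> lam t) (at t within {0..t})" using assms
    by (simp add: continuous_on_def)
  then have T: "(lam \<longlongrightarrow> lam t) (at_left t)" using assms by (simp add: at_within_Icc_at_left)
  have "eventually (\<lambda>s. s \<in> {0<..<t}) (at_left t)" by (rule eventually_at_left_real) (use assms in auto)
  then have "eventually (\<lambda>s. lam s \<in> {..<lam t} \<and> lam s \<noteq> lam t) (at_left t)"
  proof eventually_elim
    case (elim s)
    then have "lam s < lam t" using strict_mono_onD[OF lam_props(2)[OF assms(1)], of s t] assms by auto
    then show ?case by simp
  qed
  then show ?thesis using T by (simp add: filterlim_at)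
qed

lemma transfer:
  assumes "lam \<in> Lambda" "cadlag z" "cadlag x" "\<forall>\<tau>\<in>{0..1}. \<bar>z (lam \<tau>) - x \<tau>\<bar> \<le> \<delta>" "t \<in> {0..1}"
  shows "\<bar>jump z (lam t) - jump x t\<bar> \<le> 2 * \<delta>"
proof (cases "t = 0")
  case True
  have "0 \<le> \<delta>" using assms(4) by force
  then show ?thesis using True lam_props(3)[OF assms(1)] by simp
next
  case False
  then have t: "0 < t" "t \<le> 1" using assms(5) by auto
  have lt: "0 < lam t" "lam t \<le> 1"
    using strict_mono_onD[OF lam_props(2)[OF assms(1)], of 0 t] t lam_props(3)[OF assms(1)]
      lam_01[OF assms(1,5)] by auto
  define Lz where "Lz = Lim (at_left (lam t)) z"
  define Lx where "Lx = Lim (at_left t) x"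
  have Z: "(z \<longlongrightarrow> Lz) (at_left (lam t))" unfolding Lz_def using left_lim[OF assms(2) lt] .
  have X: "(x \<longlongrightarrow> Lx) (at_left t)" unfolding Lx_def using left_lim[OF assms(3) t] .
  have ZL: "((\<lambda>s. z (lam s)) \<longlongrightarrow> Lz) (at_left t)"
    using filterlim_compose[OF Z lam_filterlim[OF assms(1) t]] .
  have "eventually (\<lambda>s. s \<in> {0<..<t}) (at_left t)" by (rule eventually_at_left_real) (use t in auto)
  then have "eventually (\<lambda>s. \<bar>z (lam s) - x s\<bar> \<le> \<delta>) (at_left t)"
    by eventually_elim (use assms(4) t in auto)
  then have "\<bar>Lz - Lx\<bar> \<le> \<delta>"
    by (intro tendsto_upperbound[OF tendsto_rabs[OF tendsto_diff[OF ZL X]]]) auto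
  moreover have "\<bar>z (lam t) - x t\<bar> \<le> \<delta>" using assms(4,5) by auto
  moreover have "jump z (lam t) = z (lam t) - Lz" using jump_eq[OF lt(1) Z] .
  moreover have "jump x t = x t - Lx" using jump_eq[OF t(1) X] .
  ultimately show ?thesis by (simp add: abs_le_iff)
qed

lemma ind_left_ev:
  fixes s t :: real
  assumes "0 < s" "s \<le> 1"
  shows "eventually (\<lambda>u. indicator {t..1} u = (if t < s then 1 else (0::real))) (at_left s)"
proof (cases "t < s")
  case True
  have "eventually (\<lambda>u. u \<in> {t<..<s}) (at_left s)" by (rule eventually_at_left_real) (use True in auto)
  then show ?thesis by eventually_elim (use True assms in auto)
next
  case False
  have "eventually (\<lambda>u. u \<in> {s-1<..<s}) (at_left s)" by (rule eventually_at_left_real) auto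
  then show ?thesis by eventually_elim (use False assms in auto)
qed

lemma ind_right_ev:
  fixes s t :: real
  assumes "0 \<le> s" "s < 1"
  shows "eventually (\<lambda>u. indicator {t..1} u = (indicator {t..1} s::real)) (at_right s)"
proof (cases "t \<le> s")
  case True
  have "eventually (\<lambda>u. u \<in> {s<..<1}) (at_right s)" by (rule eventually_at_right_real) (use assms in auto)
  then show ?thesis by eventually_elim (use True assms in auto)
next
  case False
  have "eventually (\<lambda>u. u \<in> {s<..<t}) (at_right s)" by (rule eventually_at_right_real) (use False in auto)
  then show ?thesis by eventually_elim (use False assms in auto)
qed

lemma jump_ind:
  assumes "cadlag y" "0 < s" "s \<le> 1"
  shows "jump (\<lambda>u. y u - c * indicator {t..1} u) s = jump y s - (if s = t then c else 0)"
proof -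
  define L where "L = Lim (at_left s) y"
  have Y: "(y \<longlongrightarrow> L) (at_left s)" unfolding L_def using left_lim[OF assms] .
  have "((\<lambda>u. y u - c * (if t < s then 1 else 0)) \<longlongrightarrow> L - c * (if t < s then 1 else 0)) (at_left s)"
    by (intro tendsto_intros Y)
  then have T: "((\<lambda>u. y u - c * indicator {t..1} u) \<longlongrightarrow> L - c * (if t < s then 1 else 0)) (at_left s)"
    by (rule Lim_transform_eventually) (use ind_left_ev[OF assms(2,3), of t] in \<open>eventually_elim, simp\<close>)
  show ?thesis using jump_eq[OF assms(2) T] jump_eq[OF assms(2) Y] assms by (auto simp: indicator_def)
qed

lemma cadlag_ind:
  assumes "cadlag y"
  shows "cadlag (\<lambda>u. y u - c * indicator {t..1} u)"
  unfolding cadlag_def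
proof (intro conjI ballI)
  fix s :: real assume s: "s \<in> {0..<1}"
  have "(y \<longlongrightarrow> y s) (at_right s)" using assms s unfolding cadlag_def by auto
  then have "((\<lambda>u. y u - c * indicator {t..1} s) \<longlongrightarrow> y s - c * indicator {t..1} s) (at_right s)"
    by (intro tendsto_intros)
  moreover have "eventually (\<lambda>u. y u - c * indicator {t..1} s = y u - c * indicator {t..1} u) (at_right s)"
    by (rule eventually_mono[OF ind_right_ev[of s t]]) (use s in auto)
  ultimately show "((\<lambda>u. y u - c * indicator {t..1} u) \<longlongrightarrow> y s - c * indicator {t..1} s) (at_right s)"
    by (rule Lim_transform_eventually)
next
  fix s :: real assume s: "s \<in> {0<..1}"
  have Y: "(y \<longlongrightarrow> Lim (at_left s) y) (at_left s)" using left_lim[OF assms] s by auto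
  have "((\<lambda>u. y u - c * (if t < s then 1 else 0)) \<longlongrightarrow> Lim (at_left s) y - c * (if t < s then 1 else 0)) (at_left s)"
    by (intro tendsto_intros Y)
  then have "((\<lambda>u. y u - c * indicator {t..1} u) \<longlongrightarrow> Lim (at_left s) y - c * (if t < s then 1 else 0)) (at_left s)"
    by (rule Lim_transform_eventually) (use ind_left_ev[of s t] s in \<open>auto elim: eventually_mono\<close>)
  then show "\<exists>l. ((\<lambda>u. y u - c * indicator {t..1} u) \<longlongrightarrow> l) (at_left s)" by blast
qed

lemma cadlag_trim: "cadlag z \<Longrightarrow> cadlag (trim g z)"
  unfolding trim_def by (rule cadlag_ind)

lemma cadlag_trim_pow: "cadlag z \<Longrightarrow> cadlag ((trim g ^^ n) z)"
  by (induction n) (auto intro: cadlag_trim)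




lemma ind_bound: "\<bar>c\<bar> \<le> M \<Longrightarrow> \<bar>c * indicator A t\<bar> \<le> (M::real)"
  by (auto simp: indicator_def)

lemma key:
  assumes g: "goodg g" and x: "cadlag x" and A: "at_most_one (Ag g x)"
    and z: "cadlag z" and l: "l \<in> Lambda" and d: "\<forall>\<tau>\<in>{0..1}. \<bar>z (l \<tau>) - x \<tau>\<bar> \<le> \<delta>"
    and dpos: "\<delta> > 0"
    and small: "Sg g x > 0 \<Longrightarrow> \<forall>t\<in>{0..1}. t \<notin> Ag g x \<longrightarrow> g (jump x t) \<le> Sg g x - 5*\<delta>"
  shows "\<forall>\<tau>\<in>{0..1}. \<bar>trim g z (l \<tau>) - trim g x \<tau>\<bar> \<le> 3*\<delta>"
proof -
  have T: "\<And>t. t \<in> {0..1} \<Longrightarrow> \<bar>jump z (l t) - jump x t\<bar> \<le> 2*\<delta>"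
    using transfer[OF l z x d] by blast
  have TG: "\<And>t. t \<in> {0..1} \<Longrightarrow> \<bar>g (jump z (l t)) - g (jump x t)\<bar> \<le> 2*\<delta>"
    using T goodg_lip[OF g] order_trans by blast
  show ?thesis
  proof (cases "Sg g x > 0")
    case False
    then have S0: "Sg g x = 0" using Sg_nonneg[OF g x] by simp
    have "\<bar>jump x (R1g g x)\<bar> = 0" using R1g_props(1)[OF g x] S0 goodg_nonneg[OF g] by simp
    then have tx: "trim g x = x" unfolding trim_def by simp
    have Sz: "Sg g z \<le> 2*\<delta>"
    proof (rule Sg_least)
      fix s :: real assume s: "s \<in> {0..1}"
      then obtain t where t: "t \<in> {0..1}" "l t = s" using lam_surj[OF l] by blast
      have "g (jump x t) \<le> 0" using Sg_upper[OF g x t(1)] S0 by simp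
      then show "g (jump z s) \<le> 2*\<delta>" using TG[OF t(1)] t(2) by simp
    qed
    have c: "\<bar>jump z (R1g g z)\<bar> \<le> 2*\<delta>"
      using R1g_props(1)[OF g z] Sg_nonneg[OF g z] goodg_nonneg[OF g] Sz by simp
    show ?thesis
    proof
      fix \<tau> :: real assume \<tau>: "\<tau> \<in> {0..1}"
      have "\<bar>jump z (R1g g z) * indicator {R1g g z..1} (l \<tau>)\<bar> \<le> 2*\<delta>"
        using c by (rule ind_bound)
      moreover have "\<bar>z (l \<tau>) - x \<tau>\<bar> \<le> \<delta>" using d \<tau> by blast
      ultimately show "\<bar>trim g z (l \<tau>) - trim g x \<tau>\<bar> \<le> 3*\<delta>"
        unfolding tx by (simp add: trim_def abs_le_iff)
    qed
  next
    case True
    define S where "S = Sg g x"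
    have fin: "finite (Ag g x)" "Ag g x \<noteq> {}" using gap(1,2)[OF g x True] by auto
    have "card (Ag g x) \<noteq> 0" using fin by simp
    then have "card (Ag g x) = 1" using A unfolding at_most_one_def by linarith
    then obtain t1 where t1A: "Ag g x = {t1}" by (rule card_1_singletonE)
    have t1: "0 < t1" "t1 \<le> 1" "g (jump x t1) = S" using t1A unfolding Ag_def S_def by auto
    have t101: "t1 \<in> {0..1}" using t1 by auto
    have R1x: "R1g g x = t1" using R1g_props(3)[OF g x True] t1A by simp
    have gap5: "\<And>t. t \<in> {0..1} \<Longrightarrow> t \<noteq> t1 \<Longrightarrow> g (jump x t) \<le> S - 5*\<delta>"
      using small[OF True] t1A S_def by auto
    have big: "g (jump z (l t1)) \<ge> S - 2*\<delta>" using TG[OF t101] t1 by simp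
    have lessz: "\<And>t. t \<in> {0..1} \<Longrightarrow> t \<noteq> t1 \<Longrightarrow> g (jump z (l t)) < g (jump z (l t1))"
    proof -
      fix t :: real assume t: "t \<in> {0..1}" "t \<noteq> t1"
      have "g (jump z (l t)) \<le> S - 3*\<delta>" using TG[OF t(1)] gap5[OF t] by simp
      then show "g (jump z (l t)) < g (jump z (l t1))" using big dpos by simp
    qed
    have lt1: "l t1 \<in> {0..1}" using lam_01[OF l t101] .
    have Sz: "Sg g z = g (jump z (l t1))"
    proof (rule antisym)
      show "Sg g z \<le> g (jump z (l t1))"
      proof (rule Sg_least)
        fix s :: real assume s: "s \<in> {0..1}"
        then obtain t where t: "t \<in> {0..1}" "l t = s" using lam_surj[OF l] by blast
        show "g (jump z s) \<le> g (jump z (l t1))"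
        proof (cases "t = t1")
          case True then show ?thesis using t by simp
        next
          case False then show ?thesis using lessz[OF t(1) False] t by simp
        qed
      qed
      show "g (jump z (l t1)) \<le> Sg g z" using Sg_upper[OF g z lt1] .
    qed
    have P: "{s\<in>{0..1}. g (jump z s) = Sg g z} = {l t1}"
    proof (intro equalityI subsetI)
      fix s assume s: "s \<in> {s\<in>{0..1}. g (jump z s) = Sg g z}"
      then obtain t where t: "t \<in> {0..1}" "l t = s" using lam_surj[OF l] by blast
      show "s \<in> {l t1}"
      proof (cases "t = t1")
        case True then show ?thesis using t by simp
      next
        case False then show ?thesis using lessz[OF t(1) False] t s Sz by simp
      qed
    next
      fix s assume "s \<in> {l t1}"
      then show "s \<in> {s\<in>{0..1}. g (jump z s) = Sg g z}" using lt1 Sz by simp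
    qed
    have R1z: "R1g g z = l t1" unfolding R1g_def P by simp
    show ?thesis
    proof
      fix \<tau> :: real assume \<tau>: "\<tau> \<in> {0..1}"
      have ind: "indicator {l t1..1} (l \<tau>) = (indicator {t1..1} \<tau> :: real)"
        using lam_le_iff[OF l t101 \<tau>] lam_01[OF l \<tau>] \<tau> by (simp add: indicator_def)
      have e1: "trim g z (l \<tau>) - trim g x \<tau> = (z (l \<tau>) - x \<tau>) - (jump z (l t1) - jump x t1) * indicator {t1..1} \<tau>"
        unfolding trim_def R1z R1x ind by (simp add: algebra_simps)
      have "\<bar>(jump z (l t1) - jump x t1) * indicator {t1..1} \<tau>\<bar> \<le> 2*\<delta>"
        using T[OF t101] by (rule ind_bound)
      moreover have "\<bar>z (l \<tau>) - x \<tau>\<bar> \<le> \<delta>" using d \<tau> by blast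
      ultimately show "\<bar>trim g z (l \<tau>) - trim g x \<tau>\<bar> \<le> 3*\<delta>"
        unfolding e1 by (simp add: abs_le_iff)
    qed
  qed
qed




lemma main_i:
  assumes g: "goodg g" and x: "cadlag x" and A: "at_most_one (Ag g x)"
    and xs: "\<forall>n. cadlag (xs n)" and lam: "\<forall>n. lam n \<in> Lambda"
    and U: "unif_to_zero (\<lambda>n \<tau>. xs n (lam n \<tau>) - x \<tau>)"
  shows "unif_to_zero (\<lambda>n \<tau>. trim g (xs n) (lam n \<tau>) - trim g x \<tau>)"
  unfolding unif_to_zero_def
proof (intro allI impI)
  fix e :: real assume e: "e > 0"
  obtain \<delta> where dpos: "\<delta> > 0" and de: "3*\<delta> < e"
    and small: "Sg g x > 0 \<Longrightarrow> \<forall>t\<in>{0..1}. t \<notin> Ag g x \<longrightarrow> g (jump x t) \<le> Sg g x - 5*\<delta>"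
  proof (cases "Sg g x > 0")
    case True
    obtain \<eta> where eta: "\<eta> > 0" "\<forall>t\<in>{0..1}. t \<notin> Ag g x \<longrightarrow> g (jump x t) \<le> Sg g x - \<eta>"
      using gap(3)[OF g x True] by blast
    show ?thesis
    proof (rule that[of "min (e/4) (\<eta>/5)"])
      show "min (e/4) (\<eta>/5) > 0" using e eta by simp
      show "3 * min (e/4) (\<eta>/5) < e" using e by linarith
      show "\<forall>t\<in>{0..1}. t \<notin> Ag g x \<longrightarrow> g (jump x t) \<le> Sg g x - 5 * min (e/4) (\<eta>/5)"
      proof (intro ballI impI)
        fix t :: real assume "t \<in> {0..1}" "t \<notin> Ag g x"
        then have "g (jump x t) \<le> Sg g x - \<eta>" using eta(2) by blast
        moreover have "5 * min (e/4) (\<eta>/5) \<le> \<eta>" by linarith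
        ultimately show "g (jump x t) \<le> Sg g x - 5 * min (e/4) (\<eta>/5)" by linarith
      qed
    qed
  next
    case False
    show ?thesis by (rule that[of "e/4"]) (use e False in auto)
  qed
  have "eventually (\<lambda>n. \<forall>\<tau>\<in>{0..1}. \<bar>xs n (lam n \<tau>) - x \<tau>\<bar> < \<delta>) sequentially"
    using U dpos unfolding unif_to_zero_def by blast
  then show "eventually (\<lambda>n. \<forall>\<tau>\<in>{0..1}. \<bar>trim g (xs n) (lam n \<tau>) - trim g x \<tau>\<bar> < e) sequentially"
  proof eventually_elim
    case (elim n)
    have "\<forall>\<tau>\<in>{0..1}. \<bar>trim g (xs n) (lam n \<tau>) - trim g x \<tau>\<bar> \<le> 3*\<delta>"
      by (rule key[OF g x A xs[rule_format] lam[rule_format] _ dpos small])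
         (use elim in \<open>auto intro: less_imp_le\<close>)
    then show ?case using de by fastforce
  qed
qed

lemma iter_i:
  assumes g: "goodg g" and x: "cadlag x"
    and A: "\<forall>j<r. at_most_one (Ag g ((trim g ^^ j) x))"
    and xs: "\<forall>n. cadlag (xs n)" and lam: "\<forall>n. lam n \<in> Lambda"
    and U: "unif_to_zero (\<lambda>n \<tau>. xs n (lam n \<tau>) - x \<tau>)"
  shows "unif_to_zero (\<lambda>n \<tau>. (trim g ^^ r) (xs n) (lam n \<tau>) - (trim g ^^ r) x \<tau>)"
  using A
proof (induction r)
  case 0 then show ?case using U by simp
next
  case (Suc r)
  have IH: "unif_to_zero (\<lambda>n \<tau>. (trim g ^^ r) (xs n) (lam n \<tau>) - (trim g ^^ r) x \<tau>)"
    using Suc by auto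
  have "unif_to_zero (\<lambda>n \<tau>. trim g ((trim g ^^ r) (xs n)) (lam n \<tau>) - trim g ((trim g ^^ r) x) \<tau>)"
    by (rule main_i[OF g cadlag_trim_pow[OF x]]) (use Suc.prems xs lam IH cadlag_trim_pow in auto)
  then show ?case by simp
qed

lemma joint_i:
  assumes g: "goodg g" and x: "cadlag x"
    and A: "\<forall>j<r. at_most_one (Ag g ((trim g ^^ j) x))"
  shows "J1_jointly_continuous_at (trim g ^^ r) x"
  unfolding J1_jointly_continuous_at_def J1_conv_def
proof (intro allI impI)
  fix xs assume xs: "\<forall>n. cadlag (xs n)"
    and "\<exists>lam. (\<forall>n. lam n \<in> Lambda) \<and> unif_to_zero (\<lambda>n \<tau>. lam n \<tau> - \<tau>) \<and> unif_to_zero (\<lambda>n \<tau>. xs n (lam n \<tau>) - x \<tau>)"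
  then obtain lam where lam: "\<forall>n. lam n \<in> Lambda" "unif_to_zero (\<lambda>n \<tau>. lam n \<tau> - \<tau>)"
    "unif_to_zero (\<lambda>n \<tau>. xs n (lam n \<tau>) - x \<tau>)" by blast
  show "\<exists>lam. (\<forall>n. lam n \<in> Lambda) \<and> unif_to_zero (\<lambda>n \<tau>. lam n \<tau> - \<tau>) \<and>
          unif_to_zero (\<lambda>n \<tau>. xs n (lam n \<tau>) - x \<tau>) \<and>
          unif_to_zero (\<lambda>n \<tau>. (trim g ^^ r) (xs n) (lam n \<tau>) - (trim g ^^ r) x \<tau>)"
    using lam iter_i[OF g x A xs lam(1) lam(3)] by blast
qed




lemma zconv:
  fixes j t1 :: real
  shows "J1_conv (\<lambda>n u. x u - (j / (real n + 2)) * indicator {t1..1} u) x"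
  unfolding J1_conv_def
proof (intro exI[of _ "\<lambda>n t. t"] conjI allI)
  show "(\<lambda>t. t) \<in> Lambda" for n :: nat by (rule id_Lambda)
  show "unif_to_zero (\<lambda>n \<tau>. \<tau> - \<tau>)" unfolding unif_to_zero_def by simp
  show "unif_to_zero (\<lambda>n \<tau>. x \<tau> - j / (real n + 2) * indicator {t1..1} \<tau> - x \<tau>)"
    unfolding unif_to_zero_def
  proof (intro allI impI)
    fix e :: real assume e: "e > 0"
    obtain N where N: "\<bar>j\<bar> < real N * e" using reals_Archimedean3[OF e] by blast
    show "eventually (\<lambda>n. \<forall>\<tau>\<in>{0..1}. \<bar>x \<tau> - j / (real n + 2) * indicator {t1..1} \<tau> - x \<tau>\<bar> < e) sequentially"
      unfolding eventually_sequentially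
    proof (intro exI[of _ N] allI impI ballI)
      fix n \<tau> assume n: "N \<le> n"
      have "real N * e \<le> (real n + 2) * e" using n e by (intro mult_right_mono) auto
      then have "\<bar>j\<bar> < (real n + 2) * e" using N by linarith
      then have "\<bar>j / (real n + 2)\<bar> < e" by (simp add: abs_divide pos_divide_less_eq mult.commute)
      then have "\<bar>j / (real n + 2) * indicator {t1..1} \<tau>\<bar> < e" using e by (auto simp: indicator_def)
      then show "\<bar>x \<tau> - j / (real n + 2) * indicator {t1..1} \<tau> - x \<tau>\<bar> < e" by simp
    qed
  qed
qed

lemma part_ii:
  assumes g: "goodg g" and x: "cadlag x" and C: "J1_continuous_at (trim g) x"
  shows "at_most_one (Ag g x)"
proof (rule ccontr)
  assume notA: "\<not> at_most_one (Ag g x)"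
  define S where "S = Sg g x"
  have Spos: "S > 0"
  proof (rule ccontr)
    assume "\<not> S > 0"
    then have "Ag g x = {}" unfolding Ag_def S_def by auto
    then show False using notA unfolding at_most_one_def by simp
  qed
  have finA: "finite (Ag g x)" and neA: "Ag g x \<noteq> {}" using gap(1,2)[OF g x] Spos S_def by auto
  obtain \<eta> where eta: "\<eta> > 0" "\<forall>t\<in>{0..1}. t \<notin> Ag g x \<longrightarrow> g (jump x t) \<le> S - \<eta>"
    using gap(3)[OF g x] Spos S_def by blast
  have etaS: "\<eta> \<le> S"
  proof -
    have "(0::real) \<notin> Ag g x" unfolding Ag_def by auto
    then show ?thesis using eta(2) g by force
  qed
  have Aprop: "\<And>s. s \<in> Ag g x \<Longrightarrow> 0 < s \<and> s \<le> 1 \<and> g (jump x s) = S"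
    unfolding Ag_def S_def by auto
  define t1 where "t1 = Min (Ag g x)"
  have t1A: "t1 \<in> Ag g x" using finA neA t1_def by simp
  have R1x: "R1g g x = t1" using R1g_props(3)[OF g x] Spos S_def t1_def by simp
  define A' where "A' = Ag g x - {t1}"
  have finA': "finite A'" using finA A'_def by simp
  have neA': "A' \<noteq> {}"
  proof
    assume "A' = {}"
    then have "Ag g x \<subseteq> {t1}" unfolding A'_def by auto
    then have "card (Ag g x) \<le> 1" using card_mono[of "{t1}"] by fastforce
    then show False using notA finA unfolding at_most_one_def by simp
  qed
  define t2 where "t2 = Min A'"
  have t2A': "t2 \<in> A'" using finA' neA' t2_def by simp
  have t2A: "t2 \<in> Ag g x" and t21: "t2 \<noteq> t1" using t2A' A'_def by auto
  have t1p: "0 < t1" "t1 \<le> 1" "g (jump x t1) = S" using Aprop[OF t1A] by auto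
  have t2p: "0 < t2" "t2 \<le> 1" "g (jump x t2) = S" using Aprop[OF t2A] by auto
  define z where "z = (\<lambda>n u. x u - (jump x t1 / (real n + 2)) * indicator {t1..1} u)"
  have zc: "cadlag (z n)" for n unfolding z_def by (rule cadlag_ind[OF x])
  have jz: "jump (z n) s = jump x s - (if s = t1 then jump x t1 / (real n + 2) else 0)"
    if "0 < s" "s \<le> 1" for n s unfolding z_def by (rule jump_ind[OF x that])
  have gz1: "g (jump (z n) t1) < S" for n
  proof -
    define c where "c = (real n + 1) / (real n + 2)"
    have c0: "0 \<le> c" and c1: "c < 1" unfolding c_def by auto
    have e1: "jump (z n) t1 = c * jump x t1"
      using jz[OF t1p(1,2), of n] unfolding c_def by (simp add: field_simps)
    have "g (jump (z n) t1) = c * S" unfolding e1 using goodg_scale[OF g c0] t1p(3) by metis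
    moreover have "c * S < 1 * S" by (rule mult_strict_right_mono[OF c1 Spos])
    ultimately show ?thesis by simp
  qed
  have gzle: "g (jump (z n) s) \<le> S" if "s \<in> {0..1}" for n s
  proof (cases "s = 0")
    case True then show ?thesis using g Spos by simp
  next
    case False
    show ?thesis
    proof (cases "s = t1")
      case True then show ?thesis using gz1 less_imp_le by blast
    next
      case False2: False
      then have "jump (z n) s = jump x s" using jz[of s n] that False by auto
      then show ?thesis using Sg_upper[OF g x that] S_def by simp
    qed
  qed
  have jz2: "jump (z n) t2 = jump x t2" for n using jz[OF t2p(1,2)] t21 by simp
  have Sz: "Sg g (z n) = S" for n
  proof (rule antisym)
    show "Sg g (z n) \<le> S" by (rule Sg_least) (rule gzle)
    show "S \<le> Sg g (z n)" using Sg_upper[OF g zc, of t2 n] jz2 t2p by simp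
  qed
  have Pz: "{s\<in>{0..1}. g (jump (z n) s) = Sg g (z n)} = A'" for n
  proof (intro equalityI subsetI)
    fix s assume s: "s \<in> {s\<in>{0..1}. g (jump (z n) s) = Sg g (z n)}"
    then have s1: "s \<in> {0..1}" "g (jump (z n) s) = S" using Sz by auto
    have "s \<noteq> 0" using s1 g Spos by auto
    moreover have "s \<noteq> t1" using s1 gz1 by auto
    ultimately have "jump (z n) s = jump x s" "0 < s" using jz[of s n] s1 by auto
    then show "s \<in> A'" using s1 Spos S_def unfolding A'_def Ag_def using \<open>s \<noteq> t1\<close> by auto
  next
    fix s assume s: "s \<in> A'"
    then have "s \<in> Ag g x" "s \<noteq> t1" unfolding A'_def by auto
    then have "jump (z n) s = jump x s" "g (jump x s) = S" "s \<in> {0..1}" using jz[of s n] Aprop[of s] by auto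
    then show "s \<in> {s\<in>{0..1}. g (jump (z n) s) = Sg g (z n)}" using Sz by simp
  qed
  have R1z: "R1g g (z n) = t2" for n
    unfolding R1g_def Pz t2_def using finA' neA' by (simp add: cInf_eq_Min)
  have trx: "trim g x = (\<lambda>u. x u - jump x t1 * indicator {t1..1} u)"
    unfolding trim_def R1x ..
  have trz: "trim g (z n) = (\<lambda>u. z n u - jump x t2 * indicator {t2..1} u)" for n
    unfolding trim_def R1z jz2 ..
  have jtrx: "jump (trim g x) t2 = jump x t2"
    unfolding trx using jump_ind[OF x t2p(1,2)] t21 by simp
  have jtrz: "jump (trim g (z n)) s = jump (z n) s - (if s = t2 then jump x t2 else 0)"
    if "0 < s" "s \<le> 1" for n s
    unfolding trz using jump_ind[OF zc that] by simp
  have ctrx: "cadlag (trim g x)" using cadlag_trim[OF x] .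
  have ctrz: "cadlag (trim g (z n))" for n using cadlag_trim[OF zc] .
  have "J1_conv (\<lambda>n. trim g (z n)) (trim g x)"
  proof -
    have zv: "J1_conv z x" unfolding z_def by (rule zconv)
    have "\<forall>n. cadlag (z n)" using zc by blast
    then show ?thesis using C zv unfolding J1_continuous_at_def by blast
  qed
  then obtain lam where lam: "\<forall>n. lam n \<in> Lambda" "unif_to_zero (\<lambda>n \<tau>. lam n \<tau> - \<tau>)"
    "unif_to_zero (\<lambda>n \<tau>. trim g (z n) (lam n \<tau>) - trim g x \<tau>)" unfolding J1_conv_def by blast
  define D where "D = (\<lambda>a. \<bar>a - t2\<bar>) ` (Ag g x - {t2})"
  have finD: "finite D" and neD: "D \<noteq> {}" using finA t1A t21 unfolding D_def by auto
  define d where "d = Min D"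
  have dpos: "d > 0" using finD neD unfolding d_def D_def by auto
  have dle: "\<And>a. a \<in> Ag g x \<Longrightarrow> a \<noteq> t2 \<Longrightarrow> d \<le> \<bar>a - t2\<bar>"
    unfolding d_def D_def using finD D_def by (intro Min_le) auto
  define \<delta> where "\<delta> = \<eta>/4"
  have "eventually (\<lambda>n. \<forall>\<tau>\<in>{0..1}. \<bar>lam n \<tau> - \<tau>\<bar> < d) sequentially"
    using lam(2) dpos unfolding unif_to_zero_def by blast
  moreover have "eventually (\<lambda>n. \<forall>\<tau>\<in>{0..1}. \<bar>trim g (z n) (lam n \<tau>) - trim g x \<tau>\<bar> < \<delta>) sequentially"
  proof -
    have "\<delta> > 0" using eta unfolding \<delta>_def by simp
    then show ?thesis using lam(3) unfolding unif_to_zero_def by blast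
  qed
  ultimately have "eventually (\<lambda>n. (\<forall>\<tau>\<in>{0..1}. \<bar>lam n \<tau> - \<tau>\<bar> < d) \<and>
      (\<forall>\<tau>\<in>{0..1}. \<bar>trim g (z n) (lam n \<tau>) - trim g x \<tau>\<bar> < \<delta>)) sequentially"
    by (rule eventually_conj)
  then obtain n where n1: "\<forall>\<tau>\<in>{0..1}. \<bar>lam n \<tau> - \<tau>\<bar> < d"
    and n2: "\<forall>\<tau>\<in>{0..1}. \<bar>trim g (z n) (lam n \<tau>) - trim g x \<tau>\<bar> < \<delta>"
    unfolding eventually_sequentially by blast
  have t201: "t2 \<in> {0..1}" using t2p by auto
  have tr: "\<bar>jump (trim g (z n)) (lam n t2) - jump (trim g x) t2\<bar> \<le> 2*\<delta>"
    by (rule transfer[OF lam(1)[rule_format] ctrz ctrx _ t201]) (use n2 in \<open>auto intro: less_imp_le\<close>)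
  define s where "s = lam n t2"
  have s01: "s \<in> {0..1}" unfolding s_def using lam_01[OF lam(1)[rule_format] t201] .
  have sd: "\<bar>s - t2\<bar> < d" unfolding s_def using n1 t201 by blast
  have gs: "g (jump (trim g (z n)) s) \<ge> S - 2*\<delta>"
    using tr goodg_lip[OF g, of "jump (trim g (z n)) s" "jump x t2"] jtrx t2p unfolding s_def by linarith
  have pos: "S - 2*\<delta> > 0" using etaS eta unfolding \<delta>_def by simp
  have s0: "s \<noteq> 0" using gs pos g by auto
  have "s \<noteq> t2"
  proof
    assume "s = t2"
    then have "jump (trim g (z n)) s = 0" using jtrz[OF t2p(1,2)] jz2 by simp
    then show False using gs pos g by simp
  qed
  then have js: "jump (trim g (z n)) s = jump (z n) s" using jtrz[of s n] s01 s0 by auto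
  have "s \<in> Ag g x"
  proof (cases "s = t1")
    case True then show ?thesis using t1A by simp
  next
    case False
    then have "jump (z n) s = jump x s" using jz[of s n] s01 s0 by auto
    then have "g (jump x s) > S - \<eta>" using gs js pos eta unfolding \<delta>_def by simp
    then show ?thesis using eta(2) s01 by force
  qed
  then have "d \<le> \<bar>s - t2\<bar>" using dle \<open>s \<noteq> t2\<close> by blast
  then show False using sd by simp
qed



lemma single_i:
  assumes g: "goodg g" and x: "cadlag x" and A: "at_most_one (Ag g x)"
  shows "J1_jointly_continuous_at (trim g) x"
  using joint_i[OF g x, of 1] A by simp

theorem theorem2p2:
  fixes x :: "real \<Rightarrow> real" and r :: nat
  assumes "cadlag x"
  shows
    "(at_most_one (A_plus 1 x) \<longrightarrow> J1_jointly_continuous_at R_trim x)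
   \<and> ((\<forall>j<r. at_most_one (A_plus 1 ((R_trim ^^ j) x)))
        \<longrightarrow> J1_jointly_continuous_at (R_trim ^^ r) x)
   \<and> (J1_continuous_at R_trim x \<longrightarrow> at_most_one (A_plus 1 x))
   \<and> (at_most_one (A_abs 1 x) \<longrightarrow> J1_jointly_continuous_at R_trim_abs x)
   \<and> ((\<forall>j<r. at_most_one (A_abs 1 ((R_trim_abs ^^ j) x)))
        \<longrightarrow> J1_jointly_continuous_at (R_trim_abs ^^ r) x)
   \<and> (J1_continuous_at R_trim_abs x \<longrightarrow> at_most_one (A_abs 1 x))"
  unfolding R_trim_eq R_trim_abs_eq A_plus_eq A_abs_eq
  using single_i[OF goodg_id assms] joint_i[OF goodg_id assms] part_ii[OF goodg_id assms]
    single_i[OF goodg_abs assms] joint_i[OF goodg_abs assms] part_ii[OF goodg_abs assms]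
  by blast

end
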